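(* Let $0<\alpha<1$, $h>0$, $x_0\in\mathbb{R}$, and let $G:\mathbb{R}\to\mathbb{R}$ be continuous. Let $U:\{1,2,3,\dots\}\to\mathbb{R}$ be either $U(n)=n^{\alpha-1}$ (the fractional case) or $U(n)=\dfrac{\Gamma(n+\alpha-1)}{\Gamma(n)}$ (the fractional difference case). Let $(x_n)_{n\ge 0}$ be a real sequence satisfying $$x_{n+1}=x_0-\frac{h^{\alpha}}{\Gamma(\alpha)}\sum_{k=0}^{n}G(x_k)\,U(n-k+1),\qquad n\ge 0.$$ Let $W_\alpha=\sum_{n=1}^{\infty}\bigl[U(2n-1)-U(2n)\bigr]$ (a convergent series). Suppose that the limits $x_o=\lim_{n\to\infty}x_{2n+1}$ and $x_e=\lim_{n\to\infty}x_{2n}$ exist in $\mathbb{R}$ (an asymptotic period-two sink). Then $$G(x_o)+G(x_e)=0,\qquad x_o-x_e=\frac{W_\alpha}{\Gamma(\alpha)}\,h^{\alpha}\bigl[G(x_o)-G(x_e)\bigr].$$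
   Context: The recursion is the common form, for $0<\alpha<1$, of the Riemann–Liouville and Caputo universal fractional maps (kernel $U(n)=n^{\alpha-1}$) and of the Caputo $h$-difference universal map (kernel $U(n)=\Gamma(n+\alpha-1)/\Gamma(n)$, the falling factorial $(n+\alpha-2)^{(\alpha-1)}$); here $G=G_K$ is the nonlinearity of the map. Note $U(1)=1$ in the first case and $U(1)=\Gamma(\alpha)$ in the second. *)

theory Defs
  imports "HOL-Analysis.Analysis"
begin

definition U_frac :: "real \<Rightarrow> nat \<Rightarrow> real" where
  "U_frac \<alpha> n = real n powr (\<alpha> - 1)"

definition U_diff :: "real \<Rightarrow> nat \<Rightarrow> real" where
  "U_diff \<alpha> n = Gamma (real n + \<alpha> - 1) / Gamma (real n)"

text \<open>W_alpha = sum over n \<ge> 1 of U(2n-1) - U(2n), reindexed from 0.\<close>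
definition W_alpha :: "(nat \<Rightarrow> real) \<Rightarrow> real" where
  "W_alpha U = (\<Sum>n. U (2*n + 1) - U (2*n + 2))"

end

theory Submission
  imports Defs
begin


lemma even_odd_lim:
  fixes f :: "nat \<Rightarrow> real"
  assumes "(\<lambda>n. f (2*n)) \<longlonglongrightarrow> L" "(\<lambda>n. f (2*n+1)) \<longlonglongrightarrow> L"
  shows "f \<longlonglongrightarrow> L"
proof (rule LIMSEQ_I)
  fix r :: real assume r: "0 < r"
  obtain n1 where n1: "\<forall>n\<ge>n1. norm (f (2*n) - L) < r" using LIMSEQ_D[OF assms(1) r] by blast
  obtain n2 where n2: "\<forall>n\<ge>n2. norm (f (2*n+1) - L) < r" using LIMSEQ_D[OF assms(2) r] by blast
  show "\<exists>no. \<forall>n\<ge>no. norm (f n - L) < r"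
  proof (intro exI allI impI)
    fix n assume n: "2*n1+2*n2 \<le> n"
    show "norm (f n - L) < r"
    proof (cases "even n")
      case True then obtain m where "n = 2*m" by blast
      then show ?thesis using n1 n by auto
    next
      case False then obtain m where "n = 2*m+1" using oddE by blast
      then show ?thesis using n2 n by auto
    qed
  qed
qed

lemma toeplitz:
  fixes e :: "nat \<Rightarrow> real" and w :: "nat \<Rightarrow> nat \<Rightarrow> real"
  assumes e: "e \<longlonglongrightarrow> 0" and wpos: "\<And>N k. 0 \<le> w N k"
    and wsum: "\<And>N. (\<Sum>k<N. w N k) \<le> C"
    and wlim: "\<And>k. (\<lambda>N. w N k) \<longlonglongrightarrow> 0"
  shows "(\<lambda>N. \<Sum>k<N. e k * w N k) \<longlonglongrightarrow> 0"
proof (rule LIMSEQ_I)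
  fix r :: real assume r: "0 < r"
  obtain M where M: "0 < M" "\<And>k. norm (e k) \<le> M"
    using convergent_imp_Bseq[OF convergentI[OF e]] by (auto elim: BseqE)
  define \<delta> where "\<delta> = r / (2 * (\<bar>C\<bar> + 1))"
  have \<delta>: "0 < \<delta>" using r by (simp add: \<delta>_def)
  obtain K where K: "\<forall>k\<ge>K. norm (e k - 0) < \<delta>" using LIMSEQ_D[OF e \<delta>] by blast
  have "(\<lambda>N. \<Sum>k<K. w N k) \<longlonglongrightarrow> 0"
    by (rule tendsto_null_sum) (use wlim in auto)
  moreover have rM: "0 < r / (2*M)" using r M(1) by simp
  ultimately obtain N0 where N0: "\<forall>N\<ge>N0. norm ((\<Sum>k<K. w N k) - 0) < r / (2*M)"
    by (blast dest: LIMSEQ_D)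
  show "\<exists>no. \<forall>N\<ge>no. norm ((\<Sum>k<N. e k * w N k) - 0) < r"
  proof (intro exI allI impI)
    fix N assume N: "N0 \<le> N"
    have b: "\<bar>e k\<bar> * w N k \<le> \<delta> * w N k + M * (if k \<in> {..<K} then w N k else 0)" for k
    proof (cases "k < K")
      case True
      have 1: "\<bar>e k\<bar> * w N k \<le> M * w N k"
        using M(2)[of k] wpos[of N k] by (intro mult_right_mono) auto
      have 2: "0 \<le> \<delta> * w N k" using \<delta> wpos[of N k] by simp
      show ?thesis using True 1 2 by simp
    next
      case False
      then have "norm (e k - 0) < \<delta>" using K by simp
      then have "\<bar>e k\<bar> \<le> \<delta>" by simp
      then show ?thesis using False wpos[of N k] by (simp add: mult_right_mono)
    qed
    have "\<bar>\<Sum>k<N. e k * w N k\<bar> \<le> (\<Sum>k<N. \<bar>e k\<bar> * w N k)"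
    proof -
      have "\<bar>\<Sum>k<N. e k * w N k\<bar> \<le> (\<Sum>k<N. \<bar>e k * w N k\<bar>)" by (rule sum_abs)
      also have "\<dots> = (\<Sum>k<N. \<bar>e k\<bar> * w N k)"
        by (rule sum.cong) (simp_all add: abs_mult wpos)
      finally show ?thesis .
    qed
    also have "\<dots> \<le> (\<Sum>k<N. \<delta> * w N k + M * (if k \<in> {..<K} then w N k else 0))"
      by (rule sum_mono) (rule b)
    also have "\<dots> = \<delta> * (\<Sum>k<N. w N k) + M * (\<Sum>k\<in>{..<N} \<inter> {..<K}. w N k)"
      by (simp add: sum.distrib sum_distrib_left sum.inter_restrict)
    also have "\<dots> \<le> \<delta> * \<bar>C\<bar> + M * (\<Sum>k<K. w N k)"
    proof (rule add_mono)
      show "\<delta> * (\<Sum>k<N. w N k) \<le> \<delta> * \<bar>C\<bar>" using wsum[of N] \<delta> by (simp add: mult_left_mono)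
      show "M * (\<Sum>k\<in>{..<N} \<inter> {..<K}. w N k) \<le> M * (\<Sum>k<K. w N k)"
        using M(1) wpos by (intro mult_left_mono sum_mono2) auto
    qed
    also have "\<dots> < r/2 + M * (r / (2*M))"
    proof (rule add_le_less_mono)
      show "\<delta> * \<bar>C\<bar> \<le> r/2" using r by (simp add: \<delta>_def field_simps)
      have "norm ((\<Sum>k<K. w N k) - 0) < r / (2*M)" using N0 N by blast
      then have "(\<Sum>k<K. w N k) < r / (2*M)" by simp
      then show "M * (\<Sum>k<K. w N k) < M * (r / (2*M))" using M(1) by (rule mult_strict_left_mono)
    qed
    also have "\<dots> = r" using M(1) by simp
    finally show "norm ((\<Sum>k<N. e k * w N k) - 0) < r" by simp
  qed
qed



definition Bs :: "(nat \<Rightarrow> real) \<Rightarrow> nat \<Rightarrow> real" where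
  "Bs U N = (\<Sum>k<N. (-1)^k * U (N - k))"
definition Ps :: "(nat \<Rightarrow> real) \<Rightarrow> nat \<Rightarrow> real" where
  "Ps U N = (\<Sum>k<N. U (N - k))"

lemma Bs_Suc: "Bs U (Suc N) = U (Suc N) - Bs U N"
  unfolding Bs_def by (subst sum.lessThan_Suc_shift) (simp add: sum_negf)

lemma Ps_Suc: "Ps U (Suc N) = U (Suc N) + Ps U N"
  unfolding Ps_def by (subst sum.lessThan_Suc_shift) simp

lemma Ps_alt: "Ps U N = (\<Sum>i<N. U (Suc i))"
proof (induction N)
  case 0 then show ?case by (simp add: Ps_def)
next
  case (Suc N) then show ?case by (simp add: Ps_Suc)
qed

lemma Bs_inv:
  assumes mono: "\<And>n. n \<ge> 1 \<Longrightarrow> U (Suc n) \<le> U n"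
  shows "N \<ge> 1 \<Longrightarrow> (odd N \<longrightarrow> U N \<le> Bs U N \<and> Bs U N \<le> U 1) \<and>
                  (even N \<longrightarrow> U N - U 1 \<le> Bs U N \<and> Bs U N \<le> 0)"
proof (induction N rule: dec_induct)
  case base
  then show ?case by (simp add: Bs_def)
next
  case (step n)
  have m: "U (Suc n) \<le> U n" using mono step.hyps by simp
  show ?case using step.IH m by (auto simp: Bs_Suc)
qed

lemma Bs_bound:
  assumes mono: "\<And>n. n \<ge> 1 \<Longrightarrow> U (Suc n) \<le> U n" and pos: "\<And>n. n \<ge> 1 \<Longrightarrow> 0 < U n"
  shows "\<bar>Bs U N\<bar> \<le> U 1"
proof (cases "N = 0")
  case True then show ?thesis using pos[of 1] by (simp add: Bs_def)
next
  case False
  then have "N \<ge> 1" by simp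
  from Bs_inv[of U, OF mono this] pos[OF this] show ?thesis by (cases "even N") auto
qed

lemma Bs_even: "Bs U (2*n) = - (\<Sum>i<n. U (2*i+1) - U (2*i+2))"
proof (induction n)
  case 0 then show ?case by (simp add: Bs_def)
next
  case (Suc n)
  have "Bs U (2 * Suc n) = Bs U (Suc (Suc (2*n)))" by simp
  also have "\<dots> = U (2*n+2) - (U (2*n+1) - Bs U (2*n))" by (simp add: Bs_Suc)
  finally show ?case using Suc by simp
qed

lemma Ps_at_top:
  assumes pos: "\<And>n. n \<ge> 1 \<Longrightarrow> 0 < U n" and ns: "\<not> summable U"
  shows "filterlim (Ps U) at_top sequentially"
proof -
  have ns': "\<not> summable (\<lambda>i. U (Suc i))" using ns summable_Suc_iff by blast
  have nn: "0 \<le> U (Suc i)" for i using pos[of "Suc i"] by simp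
  show ?thesis unfolding filterlim_at_top
  proof
    fix Z :: real
    have "\<exists>n. Z < (\<Sum>i<n. U (Suc i))"
    proof (rule ccontr)
      assume "\<not> ?thesis"
      then have "\<And>n. (\<Sum>i<n. U (Suc i)) \<le> Z" by (simp add: not_less)
      then have "summable (\<lambda>i. U (Suc i))" by (intro summableI_nonneg_bounded[where x=Z]) (use nn in auto)
      with ns' show False by simp
    qed
    then obtain n where n: "Z < (\<Sum>i<n. U (Suc i))" by blast
    show "eventually (\<lambda>N. Z \<le> Ps U N) sequentially"
      unfolding eventually_sequentially
    proof (intro exI allI impI)
      fix N assume "n \<le> N"
      then have "(\<Sum>i<n. U (Suc i)) \<le> (\<Sum>i<N. U (Suc i))" by (intro sum_mono2) (use nn in auto)
      then show "Z \<le> Ps U N" using n by (simp add: Ps_alt)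
    qed
  qed
qed



lemma decomp:
  fixes g e f :: "nat \<Rightarrow> real" and s d :: real
  assumes "\<And>k. g k = s + (-1)^k * d + e k"
  shows "(\<Sum>k<N. g k * f k) = s * (\<Sum>k<N. f k) + d * (\<Sum>k<N. (-1)^k * f k) + (\<Sum>k<N. e k * f k)"
proof -
  have "(\<Sum>k<N. g k * f k) = (\<Sum>k<N. s * f k + d * ((-1)^k * f k) + e k * f k)"
    by (rule sum.cong) (simp_all add: assms distrib_right)
  then show ?thesis by (simp add: sum.distrib sum_distrib_left)
qed

lemma main_generic:
  fixes U :: "nat \<Rightarrow> real" and G :: "real \<Rightarrow> real" and x :: "nat \<Rightarrow> real" and c x_o x_e :: real
  assumes Upos: "\<And>n. n \<ge> 1 \<Longrightarrow> 0 < U n" and Umono: "\<And>n. n \<ge> 1 \<Longrightarrow> U (Suc n) \<le> U n"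
    and Ulim: "U \<longlonglongrightarrow> 0" and Uns: "\<not> summable U"
    and c: "0 < c" and xrec: "\<And>N. x N = x 0 - c * (\<Sum>k<N. G (x k) * U (N - k))"
    and Gc: "continuous_on UNIV G"
    and lo: "(\<lambda>n. x (2*n + 1)) \<longlonglongrightarrow> x_o" and le: "(\<lambda>n. x (2*n)) \<longlonglongrightarrow> x_e"
  shows "G x_o + G x_e = 0 \<and> x_o - x_e = (\<Sum>n. U (2*n+1) - U (2*n+2)) * c * (G x_o - G x_e)"
proof -
  define g where "g k = G (x k)" for k
  define a where "a = G x_e"
  define b where "b = G x_o"
  define s where "s = (a + b) / 2"
  define d where "d = (a - b) / 2"
  define e where "e k = g k - (s + (-1)^k * d)" for k
  have gd: "g k = s + (-1)^k * d + e k" for k by (simp add: e_def)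
  have isc: "isCont G y" for y using Gc by (simp add: continuous_on_eq_continuous_at)
  have ga: "(\<lambda>n. g (2*n)) \<longlonglongrightarrow> a"
    unfolding g_def a_def using isCont_tendsto_compose[OF isc le] .
  have gb: "(\<lambda>n. g (2*n+1)) \<longlonglongrightarrow> b"
    unfolding g_def b_def using isCont_tendsto_compose[OF isc lo] .
  have e0: "e \<longlonglongrightarrow> 0"
  proof (rule even_odd_lim)
    have "(\<lambda>n. e (2*n)) = (\<lambda>n. g (2*n) - a)" by (simp add: e_def s_def d_def field_simps)
    then show "(\<lambda>n. e (2*n)) \<longlonglongrightarrow> 0" using tendsto_diff[OF ga tendsto_const[of a]] by simp
    have "(\<lambda>n. e (2*n+1)) = (\<lambda>n. g (2*n+1) - b)" by (simp add: e_def s_def d_def field_simps)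
    then show "(\<lambda>n. e (2*n+1)) \<longlonglongrightarrow> 0" using tendsto_diff[OF gb tendsto_const[of b]] by simp
  qed
  define S where "S N = (\<Sum>k<N. g k * U (N - k))" for N
  have xS: "x N = x 0 - c * S N" for N using xrec[of N] by (simp add: S_def g_def)
  obtain X1 where X1: "\<And>n. norm (x (2*n+1)) \<le> X1"
    using convergent_imp_Bseq[OF convergentI[OF lo]] unfolding Bseq_def by blast
  obtain X2 where X2: "\<And>n. norm (x (2*n)) \<le> X2"
    using convergent_imp_Bseq[OF convergentI[OF le]] unfolding Bseq_def by blast
  define X where "X = max X1 X2"
  have X: "\<bar>x N\<bar> \<le> X" for N
  proof (cases "even N")
    case True then obtain m where "N = 2*m" by blast
    then show ?thesis using X2[of m] by (simp add: X_def)
  next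
    case False then obtain m where "N = 2*m+1" using oddE by blast
    then show ?thesis using X1[of m] by (simp add: X_def)
  qed
  define R where "R = (\<bar>x 0\<bar> + X) / c"
  have Sbd: "\<bar>S N\<bar> \<le> R" for N
  proof -
    have "c * S N = x 0 - x N" using xS[of N] by simp
    then have "c * \<bar>S N\<bar> \<le> \<bar>x 0\<bar> + X" using X[of N] c by (simp add: abs_mult[symmetric])
    then show ?thesis using c by (simp add: R_def field_simps)
  qed
  have R0: "0 \<le> R" using Sbd[of 0] by simp
  define E where "E N = (\<Sum>k<N. e k * U (N - k))" for N
  have Sdec: "S N = s * Ps U N + d * Bs U N + E N" for N
    unfolding S_def Ps_def Bs_def E_def by (rule decomp[OF gd])
  have Pnn: "0 \<le> Ps U N" for N
    unfolding Ps_def by (intro sum_nonneg) (use Upos in \<open>auto intro: less_imp_le\<close>)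
  have Ptop: "filterlim (Ps U) at_top sequentially" by (rule Ps_at_top[OF Upos Uns])
  have EP: "(\<lambda>N. E N / Ps U N) \<longlonglongrightarrow> 0"
  proof -
    define w where "w N k = (if k < N then U (N - k) / Ps U N else 0)" for N k
    have "(\<lambda>N. \<Sum>k<N. e k * w N k) \<longlonglongrightarrow> 0"
    proof (rule toeplitz[OF e0, where C=1])
      show "0 \<le> w N k" for N k
      proof (cases "k < N")
        case True
        then have "0 < U (N - k)" by (intro Upos) simp
        then show ?thesis using True Pnn[of N] by (simp add: w_def)
      qed (simp add: w_def)
      show "(\<Sum>k<N. w N k) \<le> 1" for N
      proof -
        have "(\<Sum>k<N. w N k) = (\<Sum>k<N. U (N - k)) / Ps U N"
          by (simp add: w_def sum_divide_distrib)
        also have "\<dots> = Ps U N / Ps U N" by (simp add: Ps_def)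
        also have "\<dots> \<le> 1" by (cases "Ps U N = 0") auto
        finally show ?thesis .
      qed
      show "(\<lambda>N. w N k) \<longlonglongrightarrow> 0" for k
      proof -
        have u: "(\<lambda>N. U (N - k)) \<longlonglongrightarrow> 0"
          using filterlim_compose[OF Ulim filterlim_minus_const_nat_at_top] .
        have "(\<lambda>N. U (N - k) * inverse (Ps U N)) \<longlonglongrightarrow> 0 * 0"
          by (intro tendsto_mult u tendsto_inverse_0_at_top Ptop)
        then have "(\<lambda>N. U (N - k) * inverse (Ps U N)) \<longlonglongrightarrow> 0" by simp
        moreover have "eventually (\<lambda>N. U (N - k) * inverse (Ps U N) = w N k) sequentially"
          unfolding eventually_sequentially
          by (rule exI[of _ "Suc k"]) (auto simp: w_def field_simps)
        ultimately show ?thesis by (rule Lim_transform_eventually)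
      qed
    qed
    moreover have "(\<Sum>k<N. e k * w N k) = E N / Ps U N" for N
      by (simp add: w_def E_def sum_divide_distrib)
    ultimately show ?thesis by simp
  qed
  have s0: "s = 0"
  proof (rule ccontr)
    assume sn: "s \<noteq> 0"
    then have sp: "0 < \<bar>s\<bar>" by simp
    define M0 where "M0 = (2 * (R + \<bar>d\<bar> * U 1) + 1) / \<bar>s\<bar>"
    obtain N1 where N1: "\<forall>N\<ge>N1. norm (E N / Ps U N - 0) < \<bar>s\<bar> / 2"
      using LIMSEQ_D[OF EP, of "\<bar>s\<bar>/2"] sp by auto
    obtain N2 where N2: "\<forall>N\<ge>N2. M0 \<le> Ps U N"
      using Ptop unfolding filterlim_at_top eventually_sequentially by blast
    define N where "N = N1 + N2"
    have "N2 \<le> N" by (simp add: N_def)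
    then have P1: "M0 \<le> Ps U N" using N2 by blast
    have M0p: "0 < M0" unfolding M0_def using R0 sp Upos[of 1]
      by (intro divide_pos_pos) (auto intro: add_nonneg_pos add_nonneg_nonneg mult_nonneg_nonneg)
    have Pp: "0 < Ps U N" using P1 M0p by simp
    have "N1 \<le> N" by (simp add: N_def)
    then have "norm (E N / Ps U N - 0) < \<bar>s\<bar> / 2" using N1 by blast
    then have "\<bar>E N / Ps U N\<bar> < \<bar>s\<bar> / 2" by simp
    then have "\<bar>E N\<bar> / Ps U N < \<bar>s\<bar> / 2" using Pp by (simp add: abs_divide)
    then have EN: "\<bar>E N\<bar> < \<bar>s\<bar> / 2 * Ps U N" by (simp only: pos_divide_less_eq[OF Pp])
    have BN: "\<bar>Bs U N\<bar> \<le> U 1" by (rule Bs_bound[of U, OF Umono Upos])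
    have "\<bar>s\<bar> * M0 = 2 * (R + \<bar>d\<bar> * U 1) + 1" using sp by (simp add: M0_def)
    then have big: "2 * (R + \<bar>d\<bar> * U 1) + 1 \<le> \<bar>s\<bar> * Ps U N"
      using P1 sp by (metis mult_left_mono less_imp_le)
    have dB: "\<bar>d * Bs U N\<bar> \<le> \<bar>d\<bar> * U 1" using BN by (simp add: abs_mult mult_left_mono)
    have sP: "\<bar>s * Ps U N\<bar> = \<bar>s\<bar> * Ps U N" using Pp by (simp add: abs_mult)
    have tri: "\<bar>A\<bar> - \<bar>B\<bar> - \<bar>C\<bar> \<le> \<bar>A + B + C\<bar>" for A B C :: real by arith
    have h2: "\<bar>s\<bar> / 2 * Ps U N = (\<bar>s\<bar> * Ps U N) / 2" by simp
    have lin: "R < t" if "a - bb - ee \<le> t" "ee < p/2" "bb \<le> q" "a = p" "2*(R+q)+1 \<le> p" for a bb ee t p q :: real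
      using that by simp
    have EN': "\<bar>E N\<bar> < (\<bar>s\<bar> * Ps U N) / 2" using EN h2 by simp
    have "\<bar>S N\<bar> > R" unfolding Sdec
      by (rule lin[OF tri[of "s * Ps U N" "d * Bs U N" "E N"] EN' dB sP big])
    with Sbd[of N] show False by simp
  qed
  have abd1: "a = d" using s0 unfolding s_def d_def by argo
  have abd2: "b = - d" using s0 unfolding s_def d_def by argo
  note abd = abd1 abd2
  define w2 where "w2 N k = (if k < N then U (N - k) - U (Suc N - k) else 0)" for N k
  define T where "T N = (\<Sum>k<N. e k * w2 N k)" for N
  have T0: "T \<longlonglongrightarrow> 0"
    unfolding T_def
  proof (rule toeplitz[OF e0, where C="U 1"])
    show "0 \<le> w2 N k" for N k
      using Umono[of "N-k"] by (auto simp: w2_def Suc_diff_le)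
    show "(\<Sum>k<N. w2 N k) \<le> U 1" for N
    proof -
      have eq1: "(\<Sum>k<N. w2 N k) = (\<Sum>k<N. U (N - k)) - (\<Sum>k<N. U (Suc N - k))"
        by (simp add: w2_def sum_subtractf)
      have eq2: "(\<Sum>k<N. U (Suc N - k)) = Ps U (Suc N) - U 1"
        by (simp add: Ps_def)
      have eq3: "(\<Sum>k<N. U (N - k)) = Ps U N" by (simp add: Ps_def)
      have "(\<Sum>k<N. w2 N k) = U 1 - U (Suc N)" unfolding eq1 eq2 eq3 Ps_Suc by simp
      then show ?thesis using Upos[of "Suc N"] by simp
    qed
    show "(\<lambda>N. w2 N k) \<longlonglongrightarrow> 0" for k
    proof -
      have u1: "(\<lambda>N. U (N - k)) \<longlonglongrightarrow> 0"
        using filterlim_compose[OF Ulim filterlim_minus_const_nat_at_top] .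
      have u2: "(\<lambda>N. U (Suc N - k)) \<longlonglongrightarrow> 0"
        using filterlim_compose[OF Ulim filterlim_compose[OF filterlim_minus_const_nat_at_top filterlim_Suc]] .
      have "(\<lambda>N. U (N - k) - U (Suc N - k)) \<longlonglongrightarrow> 0" using tendsto_diff[OF u1 u2] by simp
      moreover have "eventually (\<lambda>N. U (N - k) - U (Suc N - k) = w2 N k) sequentially"
        unfolding eventually_sequentially
        by (rule exI[of _ "Suc k"]) (auto simp: w2_def)
      ultimately show ?thesis by (rule Lim_transform_eventually)
    qed
  qed
  have Dform: "S (Suc N) - S N = g N * U 1 + d * (Bs U (Suc N) - (-1)^N * U 1 - Bs U N) - T N" for N
  proof -
    have 1: "S (Suc N) = (\<Sum>k<N. g k * U (Suc N - k)) + g N * U 1" by (simp add: S_def)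
    have 2: "(\<Sum>k<N. g k * U (Suc N - k)) = d * (\<Sum>k<N. (-1)^k * U (Suc N - k)) + (\<Sum>k<N. e k * U (Suc N - k))"
      using decomp[OF gd, where f="\<lambda>k. U (Suc N - k)" and N=N] s0 by simp
    have 3: "Bs U (Suc N) = (\<Sum>k<N. (-1)^k * U (Suc N - k)) + (-1)^N * U 1" by (simp add: Bs_def)
    have 4: "S N = d * Bs U N + E N" using Sdec[of N] s0 by simp
    have 5: "T N = E N - (\<Sum>k<N. e k * U (Suc N - k))"
      by (simp add: T_def E_def w2_def right_diff_distrib sum_subtractf)
    show ?thesis using 1 2 3 4 5 by (simp add: algebra_simps)
  qed
  define Wp where "Wp n = (\<Sum>i<n. U (2*i+1) - U (2*i+2))" for n
  have Wsum: "summable (\<lambda>i. U (2*i+1) - U (2*i+2))"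
  proof (rule summableI_nonneg_bounded[where x="U 1"])
    show "0 \<le> U (2*i+1) - U (2*i+2)" for i using Umono[of "2*i+1"] by simp
    show "(\<Sum>i<n. U (2*i+1) - U (2*i+2)) \<le> U 1" for n
      using Bs_bound[of U, OF Umono Upos, of "2*n"] Bs_even[of U n] by simp
  qed
  define W where "W = (\<Sum>n. U (2*n+1) - U (2*n+2))"
  have WpW: "Wp \<longlonglongrightarrow> W" unfolding Wp_def W_def by (rule summable_LIMSEQ[OF Wsum])
  have diffx: "x (2*n+1) - x (2*n) = - c * (g (2*n) * U 1 + d * (U (2*n+1) + 2 * Wp n - U 1) - T (2*n))" for n
  proof -
    have "x (2*n+1) - x (2*n) = - c * (S (Suc (2*n)) - S (2*n))" using xS[of "2*n+1"] xS[of "2*n"]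
      by (simp add: algebra_simps)
    also have "S (Suc (2*n)) - S (2*n) = g (2*n) * U 1 + d * (U (2*n+1) + 2 * Wp n - U 1) - T (2*n)"
      using Dform[of "2*n"] Bs_Suc[of U "2*n"] Bs_even[of U n] by (simp add: Wp_def)
    finally show ?thesis .
  qed
  have sm: "strict_mono (\<lambda>n::nat. 2*n)" by (auto simp: strict_mono_def)
  have sm1: "strict_mono (\<lambda>n::nat. 2*n+1)" by (auto simp: strict_mono_def)
  have U21: "(\<lambda>n. U (2*n+1)) \<longlonglongrightarrow> 0" using LIMSEQ_subseq_LIMSEQ[OF Ulim sm1] by (simp add: o_def)
  have T2: "(\<lambda>n. T (2*n)) \<longlonglongrightarrow> 0" using LIMSEQ_subseq_LIMSEQ[OF T0 sm] by (simp add: o_def)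
  have "(\<lambda>n. x (2*n+1) - x (2*n)) \<longlonglongrightarrow> - c * (a * U 1 + d * (0 + 2 * W - U 1) - 0)"
    unfolding diffx by (intro tendsto_intros ga U21 WpW T2)
  moreover have "(\<lambda>n. x (2*n+1) - x (2*n)) \<longlonglongrightarrow> x_o - x_e" by (intro tendsto_diff lo le)
  ultimately have "x_o - x_e = - c * (a * U 1 + d * (0 + 2 * W - U 1) - 0)" by (rule LIMSEQ_unique[rotated])
  then have "x_o - x_e = W * c * (b - a)" using abd by (simp add: algebra_simps)
  moreover have "b + a = 0" using abd by simp
  ultimately show ?thesis by (simp add: a_def b_def W_def)
qed


lemma frac_props:
  assumes a0: "0 < \<alpha>" and a1: "\<alpha> < 1"
  shows "(\<forall>n\<ge>1. 0 < U_frac \<alpha> n) \<and> (\<forall>n\<ge>1. U_frac \<alpha> (Suc n) \<le> U_frac \<alpha> n)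
       \<and> U_frac \<alpha> \<longlonglongrightarrow> 0 \<and> \<not> summable (U_frac \<alpha>)"
proof (intro conjI allI impI)
  fix n :: nat assume "n \<ge> 1"
  then show "0 < U_frac \<alpha> n" by (simp add: U_frac_def)
  show "U_frac \<alpha> (Suc n) \<le> U_frac \<alpha> n" unfolding U_frac_def
    using \<open>n \<ge> 1\<close> a1 by (intro powr_mono2') auto
next
  show "U_frac \<alpha> \<longlonglongrightarrow> 0" unfolding U_frac_def
    using a1 by (intro tendsto_neg_powr filterlim_real_sequentially) simp
next
  show "\<not> summable (U_frac \<alpha>)"
  proof
    assume sU: "summable (U_frac \<alpha>)"
    have "summable (\<lambda>n. inverse (real n))"
    proof (rule summable_comparison_test'[OF sU])
      fix n :: nat assume "n \<ge> 1"
      then have "real n powr (-1) \<le> real n powr (\<alpha> - 1)" using a0 by (intro powr_mono) auto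
      then show "norm (inverse (real n)) \<le> U_frac \<alpha> n" using \<open>n \<ge> 1\<close>
        by (simp add: U_frac_def powr_neg_one divide_inverse)
    qed
    then show False using not_summable_harmonic by blast
  qed
qed

lemma diff_rec:
  assumes a0: "0 < \<alpha>" and n: "n \<ge> 1"
  shows "U_diff \<alpha> (Suc n) = U_diff \<alpha> n * ((real n + \<alpha> - 1) / real n)"
proof -
  have p: "0 < real n + \<alpha> - 1" using a0 n by simp
  have ni: "real n + \<alpha> - 1 \<notin> \<int>\<^sub>\<le>\<^sub>0" using p nonpos_Ints_nonpos by fastforce
  have ni2: "real n \<notin> \<int>\<^sub>\<le>\<^sub>0" using n nonpos_Ints_nonpos by fastforce
  have e1: "real (Suc n) + \<alpha> - 1 = (real n + \<alpha> - 1) + 1" by simp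
  have "U_diff \<alpha> (Suc n) = Gamma ((real n + \<alpha> - 1) + 1) / Gamma (real n + 1)"
    unfolding U_diff_def by (subst e1, subst of_nat_Suc, subst add.commute, rule refl)
  also have "\<dots> = ((real n + \<alpha> - 1) * Gamma (real n + \<alpha> - 1)) / (real n * Gamma (real n))"
    by (simp only: Gamma_plus1[OF ni] Gamma_plus1[OF ni2])
  also have "\<dots> = U_diff \<alpha> n * ((real n + \<alpha> - 1) / real n)"
    by (simp add: U_diff_def mult.commute)
  finally show ?thesis .
qed

lemma diff_props:
  assumes a0: "0 < \<alpha>" and a1: "\<alpha> < 1"
  shows "(\<forall>n\<ge>1. 0 < U_diff \<alpha> n) \<and> (\<forall>n\<ge>1. U_diff \<alpha> (Suc n) \<le> U_diff \<alpha> n)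
       \<and> U_diff \<alpha> \<longlonglongrightarrow> 0 \<and> \<not> summable (U_diff \<alpha>)"
proof -
  let ?U = "U_diff \<alpha>"
  have pos: "0 < ?U n" if "n \<ge> 1" for n
    using that a0 by (simp add: U_diff_def)
  have mono: "?U (Suc n) \<le> ?U n" if n: "n \<ge> 1" for n
  proof -
    have "(real n + \<alpha> - 1) / real n \<le> 1" using n a1 by simp
    moreover have "(real n + \<alpha> - 1) / real n \<ge> 0" using n a0 by simp
    ultimately show ?thesis using diff_rec[OF a0 n] pos[OF n]
      by (metis mult_left_le mult.commute less_imp_le)
  qed
  have lim: "?U \<longlonglongrightarrow> 0"
  proof -
    define V where "V i = ?U (Suc i)" for i
    have "decseq V" unfolding V_def by (rule decseq_SucI) (simp add: mono)
    moreover have "\<forall>i. 0 \<le> V i" using pos by (simp add: V_def less_imp_le)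
    ultimately obtain L where VL: "V \<longlonglongrightarrow> L" and Lb: "\<forall>i. L \<le> V i"
      by (rule decseq_convergent)
    have L0: "0 \<le> L" using VL \<open>\<forall>i. 0 \<le> V i\<close> by (intro LIMSEQ_le_const) auto
    have "L = 0"
    proof (rule ccontr)
      assume "L \<noteq> 0"
      then have Lp: "0 < L" using L0 by simp
      have tele: "summable (\<lambda>i. V i - V (Suc i))" by (rule telescope_summable'[OF VL])
      have bnd: "norm (L * (1 - \<alpha>) * inverse (real (Suc i))) \<le> V i - V (Suc i)" for i
      proof -
        have "V (Suc i) = V i * ((real (Suc i) + \<alpha> - 1) / real (Suc i))"
          unfolding V_def by (rule diff_rec[OF a0]) simp
        then have "V i - V (Suc i) = V i * (1 - \<alpha>) * inverse (real (Suc i))"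
          by (simp add: field_simps)
        moreover have "L * (1 - \<alpha>) * inverse (real (Suc i)) \<le> V i * (1 - \<alpha>) * inverse (real (Suc i))"
          using Lb a1 by (intro mult_right_mono) auto
        moreover have "0 \<le> L * (1 - \<alpha>) * inverse (real (Suc i))" using L0 a1 by simp
        ultimately show ?thesis by simp
      qed
      have "summable (\<lambda>i. L * (1 - \<alpha>) * inverse (real (Suc i)))"
        by (rule summable_comparison_test'[OF tele]) (rule bnd)
      then have "summable (\<lambda>i. inverse (real (Suc i)))" using Lp a1 by simp
      then have "summable (\<lambda>i. inverse (real i))" using summable_Suc_iff[of "\<lambda>i. inverse (real i)"] by simp
      then show False using not_summable_harmonic by blast
    qed
    then have "(\<lambda>i. ?U (Suc i)) \<longlonglongrightarrow> 0" using VL by (simp add: V_def[abs_def])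
    then show ?thesis by (rule LIMSEQ_imp_Suc)
  qed
  have ns: "\<not> summable ?U"
  proof
    assume sU: "summable ?U"
    define N0 where "N0 = nat \<lceil>1/\<alpha>\<rceil> + 1"
    have N01: "N0 \<ge> 1" by (simp add: N0_def)
    have N0a: "1/\<alpha> \<le> real N0" unfolding N0_def by linarith
    have stepU: "real n * ?U n \<le> real (Suc n) * ?U (Suc n)" if "N0 \<le> n" for n
    proof -
      have n1: "n \<ge> 1" using that N01 by simp
      have "1 \<le> \<alpha> * real n"
        using N0a that a0 by (metis divide_le_eq mult.commute of_nat_le_iff order_trans)
      then have key: "real n * real n \<le> real (Suc n) * (real n + \<alpha> - 1)"
        using a0 by (simp add: algebra_simps)
      have "real (Suc n) * ?U (Suc n) = ?U n * (real (Suc n) * (real n + \<alpha> - 1) / real n)"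
        using diff_rec[OF a0 n1] by simp
      also have "\<dots> \<ge> ?U n * (real n * real n / real n)"
        using key pos[OF n1] n1 by (intro mult_left_mono divide_right_mono) auto
      finally show ?thesis using n1 by (simp add: mult.commute)
    qed
    have grow: "real N0 * ?U N0 \<le> real n * ?U n" if "N0 \<le> n" for n
      using that
    proof (induction n rule: dec_induct)
      case base then show ?case by simp
    next
      case (step m) then show ?case using stepU[of m] by simp
    qed
    define \<kappa> where "\<kappa> = real N0 * ?U N0"
    have \<kappa>: "0 < \<kappa>" using pos[OF N01] N01 by (simp add: \<kappa>_def)
    have "summable (\<lambda>n. \<kappa> * inverse (real n))"
    proof (rule summable_comparison_test'[OF sU])
      fix n assume n: "n \<ge> N0"
      then have n1: "n \<ge> 1" using N01 by simp
      have "\<kappa> \<le> real n * ?U n" using grow[OF n] by (simp add: \<kappa>_def)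
      then have "\<kappa> * inverse (real n) \<le> ?U n" using n1 by (simp add: field_simps)
      then show "norm (\<kappa> * inverse (real n)) \<le> ?U n" using \<kappa> by simp
    qed
    then have "summable (\<lambda>n. inverse (real n))" using \<kappa> by simp
    then show False using not_summable_harmonic by blast
  qed
  show ?thesis using pos mono lim ns by blast
qed


theorem mainTheorem1:
  fixes \<alpha> h :: real and G :: "real \<Rightarrow> real" and U :: "nat \<Rightarrow> real"
    and x :: "nat \<Rightarrow> real" and x_o x_e :: real
  assumes "0 < \<alpha>" "\<alpha> < 1" "0 < h"
    and "continuous_on UNIV G"
    and "U = U_frac \<alpha> \<or> U = U_diff \<alpha>"
    and "\<And>n. x (Suc n) = x 0 - h powr \<alpha> / Gamma \<alpha> * (\<Sum>k\<le>n. G (x k) * U (n - k + 1))"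
    and "(\<lambda>n. x (2*n + 1)) \<longlonglongrightarrow> x_o"
    and "(\<lambda>n. x (2*n)) \<longlonglongrightarrow> x_e"
  shows "G x_o + G x_e = 0 \<and>
         x_o - x_e = W_alpha U / Gamma \<alpha> * h powr \<alpha> * (G x_o - G x_e)"
proof -
  have props: "(\<forall>n\<ge>1. 0 < U n) \<and> (\<forall>n\<ge>1. U (Suc n) \<le> U n) \<and> U \<longlonglongrightarrow> 0 \<and> \<not> summable U"
  proof (cases "U = U_frac \<alpha>")
    case True
    show ?thesis unfolding True by (rule frac_props[OF assms(1,2)])
  next
    case False
    then have "U = U_diff \<alpha>" using assms(5) by blast
    show ?thesis unfolding \<open>U = U_diff \<alpha>\<close> by (rule diff_props[OF assms(1,2)])
  qed
  have P1: "\<And>n. n \<ge> 1 \<Longrightarrow> 0 < U n" using props by blast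
  have P2: "\<And>n. n \<ge> 1 \<Longrightarrow> U (Suc n) \<le> U n" using props by blast
  have P3: "U \<longlonglongrightarrow> 0" using props by blast
  have P4: "\<not> summable U" using props by blast
  define c where "c = h powr \<alpha> / Gamma \<alpha>"
  have c: "0 < c" using assms(1,3) by (simp add: c_def)
  have xrec: "x N = x 0 - c * (\<Sum>k<N. G (x k) * U (N - k))" for N
  proof (cases N)
    case 0 then show ?thesis by simp
  next
    case (Suc n)
    have "(\<Sum>k\<le>n. G (x k) * U (n - k + 1)) = (\<Sum>k<Suc n. G (x k) * U (Suc n - k))"
      unfolding lessThan_Suc_atMost by (rule sum.cong) (auto simp: Suc_diff_le)
    then show ?thesis using assms(6)[of n] Suc by (simp add: c_def)
  qed
  have "G x_o + G x_e = 0 \<and> x_o - x_e = (\<Sum>n. U (2*n+1) - U (2*n+2)) * c * (G x_o - G x_e)"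
    by (rule main_generic[OF P1 P2 P3 P4 c xrec assms(4) assms(7) assms(8)])
  then show ?thesis by (simp add: W_alpha_def c_def)
qed


end
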